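(* Let $n\ge 3$. There exists an anti-$\mathrm{SL}_2$-tiling of $\mathbb{Z}^n$, and it is unique up to translation: every anti-$\mathrm{SL}_2$-tiling $(b_{\mathbf{i}})$ of $\mathbb{Z}^n$ satisfies $b_{\mathbf{i}}=a_{\mathbf{i}+\mathbf{t}}$ for all $\mathbf{i}$ for some fixed $\mathbf{t}\in\mathbb{Z}^n$, where $a_{\mathbf{i}}=f(i_1+\dots+i_n)$ with $f(r)=F_{2r-1}$ for $r\ge1$ and $f(r)=F_{1-2r}$ for $r\le 0$. In particular, every two-dimensional slice of an anti-$\mathrm{SL}_2$-tiling of $\mathbb{Z}^n$ (obtained by fixing all but two coordinates of $\mathbf{i}$) is a translate of the staircase anti-$\mathrm{SL}_2$-tiling of $\mathbb{Z}^2$ given by $(i,j)\mapsto f(i+j)$, and all entries are odd-indexed Fibonacci numbers.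
   Context: Write $\mathbf{i}=(i_1,\dots,i_n)\in\mathbb{Z}^n$ and $\mathbf{e}_k$ for the $k$-th standard unit vector. An anti-$\mathrm{SL}_2$-tiling of $\mathbb{Z}^n$ is an array $(a_{\mathbf{i}})_{\mathbf{i}\in\mathbb{Z}^n}$ with all $a_{\mathbf{i}}\in\mathbb{Z}_{>0}$ such that for all $\mathbf{i}\in\mathbb{Z}^n$ and all $k\ne\ell$: $a_{\mathbf{i}+\mathbf{e}_\ell}a_{\mathbf{i}+\mathbf{e}_k}-a_{\mathbf{i}}a_{\mathbf{i}+\mathbf{e}_k+\mathbf{e}_\ell}=-1$. Fibonacci numbers are indexed $F_1=1,F_2=1,F_3=2,F_4=3,F_5=5,\dots$ with $F_{m+2}=F_{m+1}+F_m$. *)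

theory Defs
  imports "HOL-Analysis.Analysis" "HOL-Number_Theory.Fib"
begin

text \<open>Points of Z^n are vectors int^'n (n = CARD('n)); the k-th unit vector is axis k 1.\<close>

definition anti_SL2_tiling :: "((int ^ 'n) \<Rightarrow> int) \<Rightarrow> bool" where
  "anti_SL2_tiling a \<longleftrightarrow>
     (\<forall>i. a i > 0) \<and>
     (\<forall>i k l. k \<noteq> l \<longrightarrow>
        a (i + axis l 1) * a (i + axis k 1) - a i * a (i + axis k 1 + axis l 1) = -1)"

definition fibf :: "int \<Rightarrow> int" where
  "fibf r = (if r \<ge> 1 then int (fib (nat (2*r - 1))) else int (fib (nat (1 - 2*r))))"

definition staircase :: "(int ^ 'n) \<Rightarrow> int" where
  "staircase i = fibf (\<Sum>k\<in>UNIV. i $ k)"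

end

theory Submission
  imports Defs
begin

lemma fib_3step: "fib (n+4) + fib n = 3 * fib (n+2)"
  by (simp add: numeral_eq_Suc)

lemma fib_3step_int: "m = n+4 \<Longrightarrow> p = n+2 \<Longrightarrow> int (fib m) + int (fib n) = 3 * int (fib p)"
  using fib_3step[of n] by (metis of_nat_add of_nat_mult of_nat_numeral)

lemma fib_odd_rel: "int (fib (2*k+1)) * int (fib (2*k+5)) = int (fib (2*k+3))^2 + 1"
proof (induction k)
  case 0 then show ?case by (simp add: numeral_eq_Suc)
next
  case (Suc k)
  have e1: "int (fib (2*k+1)) = 3 * int (fib (2*k+3)) - int (fib (2*k+5))"
    using fib_3step_int[of "2*k+5" "2*k+1" "2*k+3"] by simp
  have e2: "int (fib (2*Suc k+5)) = 3 * int (fib (2*k+5)) - int (fib (2*k+3))"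
    using fib_3step_int[of "2*Suc k+5" "2*k+3" "2*k+5"] by simp
  have e3: "2*Suc k+1 = 2*k+3" "2*Suc k+3 = 2*k+5" by auto
  show ?case using Suc.IH unfolding e2 e3 e1 by (simp add: algebra_simps power2_eq_square)
qed

lemma fibf_pos: "fibf r > 0"
  unfolding fibf_def by (auto intro!: fib_neq_0_nat)

lemma fibf_0: "fibf 0 = 1" and fibf_1: "fibf 1 = 1"
  by (simp_all add: fibf_def)

lemma fibf_sym: "fibf (1 - r) = fibf r"
  unfolding fibf_def by (auto simp: algebra_simps)

lemma fibf_rel_pos: "r \<ge> 1 \<Longrightarrow> fibf r * fibf (r+2) = fibf (r+1)^2 + 1"
proof -
  assume "r \<ge> 1"
  then obtain k where k: "r = int k + 1" by (metis add.commute le_add_diff_inverse zle_iff_zadd)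
  have "nat (2*r - 1) = 2*k+1" "nat (2*(r+2) - 1) = 2*k+5" "nat (2*(r+1) - 1) = 2*k+3"
    using k by auto
  then show ?thesis using fib_odd_rel[of k] \<open>r \<ge> 1\<close> unfolding fibf_def by simp
qed

lemma fibf_rel: "fibf r * fibf (r+2) = fibf (r+1)^2 + 1"
proof -
  consider "r \<ge> 1" | "r = 0" | "r = -1" | "r \<le> -2" by linarith
  then show ?thesis
  proof cases
    case 1 then show ?thesis by (rule fibf_rel_pos)
  next
    case 2 then show ?thesis by (simp add: fibf_def numeral_eq_Suc)
  next
    case 3 then show ?thesis by (simp add: fibf_def numeral_eq_Suc)
  next
    case 4
    have r: "fibf (-1-r) * fibf (-1-r+2) = fibf (-1-r+1)^2 + 1"
      using 4 by (intro fibf_rel_pos) simp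
    have "fibf r = fibf (-1-r+2)" using fibf_sym[of r] by (simp add: algebra_simps)
    moreover have "fibf (r+2) = fibf (-1-r)" using fibf_sym[of "r+2"] by (simp add: algebra_simps)
    moreover have "fibf (r+1) = fibf (-1-r+1)" using fibf_sym[of "r+1"] by (simp add: algebra_simps)
    ultimately show ?thesis using r by (simp add: algebra_simps)
  qed
qed

lemma fibf_odd: "\<exists>m. odd m \<and> fibf r = int (fib m)"
proof (cases "r \<ge> 1")
  case True then show ?thesis unfolding fibf_def
    by (intro exI[of _ "nat (2*r-1)"]) (auto simp: even_nat_iff)
next
  case False then show ?thesis unfolding fibf_def
    by (intro exI[of _ "nat (1-2*r)"]) (auto simp: even_nat_iff)
qed


definition S :: "int ^ 'n \<Rightarrow> int" where "S y = (\<Sum>j\<in>UNIV. y $ j)"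

lemma S_add: "S (x + y) = S x + S y"
  by (simp add: S_def sum.distrib)
lemma S_diff: "S (x - y) = S x - S y"
  by (simp add: S_def sum_subtractf)
lemma S_axis: "S (axis k c) = c"
  by (simp add: S_def axis_def)

lemma third_index:
  assumes "CARD('n) \<ge> 3"
  shows "\<exists>m::'n. m \<noteq> k \<and> m \<noteq> l"
proof (rule ccontr)
  assume "\<not> ?thesis"
  then have "(UNIV::'n set) \<subseteq> {k,l}" by auto
  then have "CARD('n) \<le> card {k,l}" by (intro card_mono) auto
  also have "\<dots> \<le> 2" by (simp add: card_insert_if)
  finally show False using assms by simp
qed

lemma cube_arith:
  fixes a0 a1 a2 a3 a12 a13 a23 T :: int
  assumes "a2*a1 - a0*a12 = -1" "a3*a1 - a0*a13 = -1" "a3*a2 - a0*a23 = -1"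
    "a13*a12 - a1*T = -1" "a23*a12 - a2*T = -1"
    "a0 > 0" "a1 > 0" "a2 > 0"
  shows "a1 = a2"
proof -
  have "(a2 - a1) * (a1*a2 + 1 + a0^2) = 0" using assms(1-5) by algebra
  moreover have "a1*a2 + 1 + a0^2 > 0" using assms(6-8) by (simp add: add_pos_pos)
  ultimately show ?thesis by simp
qed

lemma cube:
  fixes a :: "int ^ 'n \<Rightarrow> int"
  assumes t: "anti_SL2_tiling a" and d: "k \<noteq> l" "k \<noteq> m" "l \<noteq> m"
  shows "a (x + axis k 1) = a (x + axis l 1)"
proof -
  have pos: "\<And>i. a i > 0" and r: "\<And>i k l. k \<noteq> l \<Longrightarrow>
        a (i + axis l 1) * a (i + axis k 1) - a i * a (i + axis k 1 + axis l 1) = -1"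
    using t unfolding anti_SL2_tiling_def by auto
  have F2: "a (x + axis l 1 + axis m 1) * a (x + axis k 1 + axis l 1)
      - a (x + axis l 1) * a (x + axis k 1 + axis l 1 + axis m 1) = -1"
    using r[of k m "x + axis l 1"] d by (simp add: add_ac)
  show ?thesis
    by (rule cube_arith[OF r[of k l x] r[of k m x] r[of l m x] r[of l m "x + axis k 1"] F2 pos pos pos])
      (use d in auto)
qed

lemma shift:
  fixes a :: "int ^ 'n \<Rightarrow> int"
  assumes t: "anti_SL2_tiling a" and c: "CARD('n) \<ge> 3" and d: "k \<noteq> l"
  shows "a (y - axis k 1 + axis l 1) = a y"
proof -
  obtain m where "m \<noteq> k" "m \<noteq> l" using third_index[OF c] by blast
  then have "a ((y - axis k 1) + axis k 1) = a ((y - axis k 1) + axis l 1)"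
    using cube[OF t d, of m "y - axis k 1"] by auto
  then show ?thesis by simp
qed

lemma depends_on_sum:
  fixes a :: "int ^ 'n \<Rightarrow> int"
  assumes t: "anti_SL2_tiling a" and c: "CARD('n) \<ge> 3"
  shows "S y = S z \<Longrightarrow> a y = a z"
proof (induction "nat (\<Sum>j\<in>UNIV. \<bar>y $ j - z $ j\<bar>)" arbitrary: y rule: less_induct)
  case less
  show ?case
  proof (cases "y = z")
    case True then show ?thesis by simp
  next
    case False
    then obtain j0 where j0: "y $ j0 \<noteq> z $ j0" by (auto simp: vec_eq_iff)
    have "\<exists>k. y $ k > z $ k"
    proof (rule ccontr)
      assume "\<not> ?thesis"
      then have "\<forall>j. y $ j \<le> z $ j" by (auto simp: not_less)
      then have "S y < S z" unfolding S_def using j0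
        by (intro sum_strict_mono_ex1) (auto simp: order.order_iff_strict)
      then show False using less.prems by simp
    qed
    then obtain k where k: "y $ k > z $ k" by blast
    have "\<exists>l. y $ l < z $ l"
    proof (rule ccontr)
      assume "\<not> ?thesis"
      then have "\<forall>j. z $ j \<le> y $ j" by (auto simp: not_less)
      then have "S z < S y" unfolding S_def using j0
        by (intro sum_strict_mono_ex1) (simp_all, metis j0 order_le_neq_trans)
      then show False using less.prems by simp
    qed
    then obtain l where l: "y $ l < z $ l" by blast
    have kl: "k \<noteq> l" using k l by auto
    define y' where "y' = y - axis k 1 + axis l 1"
    have comp: "\<And>j. y' $ j = y $ j - (if j = k then 1 else 0) + (if j = l then 1 else 0)"
      by (simp add: y'_def axis_def)
    have lt: "(\<Sum>j\<in>UNIV. \<bar>y' $ j - z $ j\<bar>) < (\<Sum>j\<in>UNIV. \<bar>y $ j - z $ j\<bar>)"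
      by (rule sum_strict_mono_ex1) (use k l kl in \<open>auto simp: comp intro: exI[of _ k]\<close>)
    have "nat (\<Sum>j\<in>UNIV. \<bar>y' $ j - z $ j\<bar>) < nat (\<Sum>j\<in>UNIV. \<bar>y $ j - z $ j\<bar>)"
      using lt by (subst nat_less_eq_zless) (auto intro: sum_nonneg)
    moreover have "S y' = S z" using less.prems by (simp add: y'_def S_add S_diff S_axis)
    ultimately have "a y' = a z" by (rule less.hyps)
    moreover have "a y' = a y" unfolding y'_def by (rule shift[OF t c kl])
    ultimately show ?thesis by simp
  qed
qed


lemma seq_unique:
  fixes g1 g2 :: "int \<Rightarrow> int"
  assumes p1: "\<And>s. g1 s > 0" and p2: "\<And>s. g2 s > 0"
    and r1: "\<And>s. g1 s * g1 (s+2) = g1 (s+1)^2 + 1"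
    and r2: "\<And>s. g2 s * g2 (s+2) = g2 (s+1)^2 + 1"
    and i0: "g1 0 = g2 0" and i1: "g1 1 = g2 1"
  shows "g1 s = g2 s"
proof -
  have fw1: "g1 (s+2) = (g1 (s+1)^2 + 1) div g1 s" for s
    using r1[of s] p1[of s] by (metis less_irrefl nonzero_mult_div_cancel_left)
  have fw2: "g2 (s+2) = (g2 (s+1)^2 + 1) div g2 s" for s
    using r2[of s] p2[of s] by (metis less_irrefl nonzero_mult_div_cancel_left)
  have bw1: "g1 s = (g1 (s+1)^2 + 1) div g1 (s+2)" for s
    using r1[of s] p1[of "s+2"] by (metis less_irrefl nonzero_mult_div_cancel_right)
  have bw2: "g2 s = (g2 (s+1)^2 + 1) div g2 (s+2)" for s
    using r2[of s] p2[of "s+2"] by (metis less_irrefl nonzero_mult_div_cancel_right)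
  have F: "g1 (int n) = g2 (int n) \<and> g1 (int n + 1) = g2 (int n + 1)" for n
  proof (induction n)
    case 0 then show ?case using i0 i1 by simp
  next
    case (Suc n)
    have "g1 (int n + 2) = g2 (int n + 2)" using fw1[of "int n"] fw2[of "int n"] Suc by simp
    then show ?case using Suc by (simp add: ac_simps)
  qed
  have B: "g1 (- int n) = g2 (- int n) \<and> g1 (1 - int n) = g2 (1 - int n)" for n
  proof (induction n)
    case 0 then show ?case using i0 i1 by simp
  next
    case (Suc n)
    have "g1 (- int n - 1) = g2 (- int n - 1)"
      using bw1[of "- int n - 1"] bw2[of "- int n - 1"] Suc by (simp add: algebra_simps)
    moreover have "- int (Suc n) = - int n - 1" "1 - int (Suc n) = - int n" by simp_all
    ultimately show ?case using Suc by metis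
  qed
  show ?thesis
  proof (cases "s \<ge> 0")
    case True then show ?thesis using F[of "nat s"] by simp
  next
    case False then show ?thesis using B[of "nat (-s)"] by simp
  qed
qed

lemma seq_min:
  fixes h :: "int \<Rightarrow> int"
  assumes p: "\<And>s. h s > 0" and r: "\<And>s. h s * h (s+2) = h (s+1)^2 + 1"
  shows "\<exists>s0. h s0 = 1 \<and> h (s0+1) = 1"
proof -
  define M where "M = (LEAST k::nat. \<exists>s. h s = int k)"
  have ex: "\<exists>s. h s = int (nat (h 0))" using p[of 0] by auto
  have "\<exists>s. h s = int M" unfolding M_def by (rule LeastI_ex) (use ex in blast)
  then obtain s0 where s0: "h s0 = int M" by blast
  have le: "int M \<le> h s" for s
  proof -
    have "M \<le> nat (h s)" unfolding M_def by (rule Least_le) (use p[of s] in auto)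
    then show ?thesis using p[of s] by linarith
  qed
  have Mpos: "int M > 0" using s0 p[of s0] by simp
  consider "h (s0+1) = int M" | "h (s0 - 1) = int M" | "h (s0+1) > int M" "h (s0-1) > int M"
    using le[of "s0+1"] le[of "s0-1"] by linarith
  then show ?thesis
  proof cases
    case 1
    have "int M * h (s0+2) = int M ^2 + 1" using r[of s0] s0 1 by simp
    then have "int M * (h (s0+2) - int M) = 1" by (simp add: algebra_simps power2_eq_square)
    then have "int M = 1" using Mpos by (simp add: pos_zmult_eq_1_iff)
    then show ?thesis using s0 1 by auto
  next
    case 2
    have "h (s0 - 2) * int M = int M ^2 + 1" using r[of "s0-2"] s0 2 by simp
    then have "int M * (h (s0-2) - int M) = 1" by (simp add: algebra_simps power2_eq_square)
    then have "int M = 1" using Mpos by (simp add: pos_zmult_eq_1_iff)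
    then show ?thesis using s0 2 by (intro exI[of _ "s0 - 1"]) auto
  next
    case 3
    have "h (s0 - 1) * h (s0+1) = int M ^2 + 1" using r[of "s0-1"] s0 by (simp add: ac_simps)
    moreover have "(int M + 1) * (int M + 1) \<le> h (s0 - 1) * h (s0+1)"
      using 3 Mpos by (intro mult_mono) auto
    ultimately show ?thesis using Mpos by (simp add: algebra_simps power2_eq_square)
  qed
qed

lemma S_slice:
  assumes "k \<noteq> l"
  shows "S (\<chi> j. if j = k then p else if j = l then q else i $ j) = p + q + (\<Sum>j\<in>UNIV-{k,l}. i $ j)"
proof -
  have U: "(UNIV::'a set) = insert k (insert l (UNIV - {k,l}))" by auto
  let ?v = "(\<chi> j. if j = k then p else if j = l then q else i $ j)"
  have "S ?v = ?v $ k + (?v $ l + (\<Sum>j\<in>UNIV-{k,l}. ?v $ j))"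
    unfolding S_def by (subst U) (use assms in \<open>simp add: sum.insert\<close>)
  also have "(\<Sum>j\<in>UNIV-{k,l}. ?v $ j) = (\<Sum>j\<in>UNIV-{k,l}. i $ j)"
    by (rule sum.cong) auto
  finally show ?thesis using assms by simp
qed


lemma staircase_S: "staircase y = fibf (S y)"
  by (simp add: staircase_def S_def)

lemma staircase_tiling: "anti_SL2_tiling (staircase :: int ^ 'n \<Rightarrow> int)"
  unfolding anti_SL2_tiling_def
proof (intro conjI allI impI)
  fix i :: "int ^ 'n" show "staircase i > 0" by (simp add: staircase_S fibf_pos)
next
  fix i :: "int ^ 'n" and k l :: 'n
  have "fibf (S i) * fibf (S i + 2) = fibf (S i + 1)^2 + 1" by (rule fibf_rel)
  moreover have "S i + 1 + 1 = S i + 2" by simp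
  ultimately show "staircase (i + axis l 1) * staircase (i + axis k 1) -
       staircase i * staircase (i + axis k 1 + axis l 1) = - 1"
    by (simp add: staircase_S S_add S_axis power2_eq_square ac_simps)
qed

lemma tiling_is_staircase:
  fixes b :: "int ^ 'n \<Rightarrow> int"
  assumes t: "anti_SL2_tiling b" and c: "CARD('n) \<ge> 3"
  shows "\<exists>t. \<forall>i. b i = staircase (i + t)"
proof -
  obtain k0 :: 'n where True by blast
  obtain l0 where l0: "l0 \<noteq> k0" using third_index[OF c, of k0 k0] by blast
  have pos: "\<And>i. b i > 0" and r: "\<And>i k l. k \<noteq> l \<Longrightarrow>
        b (i + axis l 1) * b (i + axis k 1) - b i * b (i + axis k 1 + axis l 1) = -1"
    using t unfolding anti_SL2_tiling_def by auto
  define h where "h s = b (axis k0 s)" for s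
  have bh: "b y = h (S y)" for y
    unfolding h_def by (rule depends_on_sum[OF t c]) (simp add: S_axis)
  have hp: "h s > 0" for s using pos by (simp add: h_def)
  have hr: "h s * h (s+2) = h (s+1)^2 + 1" for s
  proof -
    have "b (axis k0 s + axis l0 1) * b (axis k0 s + axis k0 1)
       - b (axis k0 s) * b (axis k0 s + axis k0 1 + axis l0 1) = -1"
      using r[of k0 l0 "axis k0 s"] l0 by auto
    moreover have "S (axis k0 s + axis k0 1 + axis l0 1) = s + 2"
      by (simp add: S_add S_axis)
    ultimately show ?thesis by (simp add: bh S_add S_axis power2_eq_square ac_simps)
  qed
  obtain s0 where s0: "h s0 = 1" "h (s0+1) = 1" using seq_min[OF hp hr] by blast
  have eq: "h (s + s0) = fibf s" for s
  proof (rule seq_unique[of "\<lambda>s. h (s + s0)" fibf, simplified])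
    show "\<And>s. 0 < h (s + s0)" by (rule hp)
    show "\<And>s. 0 < fibf s" by (rule fibf_pos)
    show "\<And>s. h (s + s0) * h (s + 2 + s0) = (h (s + 1 + s0))\<^sup>2 + 1"
    proof -
      fix s
      have e: "s + 2 + s0 = (s + s0) + 2" "s + 1 + s0 = (s + s0) + 1" by simp_all
      show "h (s + s0) * h (s + 2 + s0) = (h (s + 1 + s0))\<^sup>2 + 1" unfolding e by (rule hr)
    qed
    show "\<And>s. fibf s * fibf (s + 2) = (fibf (s + 1))\<^sup>2 + 1" by (rule fibf_rel)
    show "h s0 = fibf 0" using s0 by (simp add: fibf_0)
    show "h (1 + s0) = fibf 1" using s0 by (simp add: fibf_1 ac_simps)
  qed
  show ?thesis
  proof (intro exI allI)
    fix i
    have "b i = h ((S i - s0) + s0)" by (simp add: bh)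
    also have "\<dots> = fibf (S i - s0)" by (rule eq)
    also have "\<dots> = staircase (i + axis k0 (- s0))" by (simp add: staircase_S S_add S_axis)
    finally show "b i = staircase (i + axis k0 (- s0))" .
  qed
qed

theorem theorem2p3:
  assumes "CARD('n) \<ge> 3"
  shows "(\<exists>a :: (int ^ 'n) \<Rightarrow> int. anti_SL2_tiling a)
    \<and> (\<forall>b :: (int ^ 'n) \<Rightarrow> int. anti_SL2_tiling b \<longrightarrow>
          (\<exists>t. \<forall>i. b i = staircase (i + t)))
    \<and> (\<forall>b :: (int ^ 'n) \<Rightarrow> int. anti_SL2_tiling b \<longrightarrow>
          (\<forall>i k l. k \<noteq> l \<longrightarrow>
             (\<exists>u v. \<forall>p q. b (\<chi> j. if j = k then p else if j = l then q else i $ j)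
                           = fibf ((p + u) + (q + v)))))
    \<and> (\<forall>b :: (int ^ 'n) \<Rightarrow> int. anti_SL2_tiling b \<longrightarrow>
          (\<forall>i. \<exists>m. odd m \<and> b i = int (fib m)))"
proof (intro conjI allI impI)
  show "\<exists>a :: (int ^ 'n) \<Rightarrow> int. anti_SL2_tiling a" using staircase_tiling by blast
next
  fix b :: "int ^ 'n \<Rightarrow> int" assume "anti_SL2_tiling b"
  then show "\<exists>t. \<forall>i. b i = staircase (i + t)" using tiling_is_staircase assms by blast
next
  fix b :: "int ^ 'n \<Rightarrow> int" and i :: "int ^ 'n" and k l :: 'n
  assume t: "anti_SL2_tiling b" and kl: "k \<noteq> l"
  obtain t where tt: "\<forall>i. b i = staircase (i + t)" using tiling_is_staircase[OF t assms] by blast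
  show "\<exists>u v. \<forall>p q. b (\<chi> j. if j = k then p else if j = l then q else i $ j)
                           = fibf ((p + u) + (q + v))"
  proof (intro exI allI)
    fix p q
    show "b (\<chi> j. if j = k then p else if j = l then q else i $ j)
        = fibf ((p + ((\<Sum>j\<in>UNIV-{k,l}. i $ j) + S t)) + (q + 0))"
      using tt S_slice[OF kl, of p q i] by (simp add: staircase_S S_add ac_simps)
  qed
next
  fix b :: "int ^ 'n \<Rightarrow> int" and i :: "int ^ 'n"
  assume t: "anti_SL2_tiling b"
  obtain t where tt: "\<forall>i. b i = staircase (i + t)" using tiling_is_staircase[OF t assms] by blast
  show "\<exists>m. odd m \<and> b i = int (fib m)" using tt fibf_odd by (simp add: staircase_S)
qed


end
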